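(* If $X\sim\mathcal N(0,\Sigma)$ is an $n$-dimensional Gaussian random vector and $\rho(x)=\max\{0,x\}$ acts entrywise, then $\mathbb E\|\rho(X)\|_2\ge\frac12\mathbb E\|X\|_2$. *)

theory Defs
  imports "HOL-Probability.Probability"
begin

definition relu_vec :: "real^'n \<Rightarrow> real^'n" where
  "relu_vec x = (\<chi> i. max 0 (x $ i))"

definition centered_gaussian_vector ::
  "'a measure \<Rightarrow> ('a \<Rightarrow> real^'n) \<Rightarrow> real^'n^'n \<Rightarrow> bool" where
  "centered_gaussian_vector M X S \<longleftrightarrow>
     prob_space M \<and> X \<in> borel_measurable M \<and> transpose S = S \<and>
     (\<forall>u. distr M borel (\<lambda>\<omega>. u \<bullet> X \<omega>) =
        (if u \<bullet> (S *v u) = 0 then return borel 0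
         else density lborel (normal_density 0 (sqrt (u \<bullet> (S *v u))))))"

end

theory Submission
  imports Defs
begin


inductive ct :: "(real^'n \<Rightarrow> complex) \<Rightarrow> bool" where
  ct_exp: "ct (\<lambda>x. c * exp (\<i> * complex_of_real (t \<bullet> x)))"
| ct_add: "ct f \<Longrightarrow> ct g \<Longrightarrow> ct (\<lambda>x. f x + g x)"

lemma ct_const: "ct (\<lambda>x. c)"
  using ct_exp[of c 0] by simp

lemma ct_mult_exp: "ct g \<Longrightarrow> ct (\<lambda>x. (c * exp (\<i> * complex_of_real (t \<bullet> x))) * g x)"
proof (induction rule: ct.induct)
  case (ct_exp d u)
  have "(\<lambda>x. (c * exp (\<i> * complex_of_real (t \<bullet> x))) * (d * exp (\<i> * complex_of_real (u \<bullet> x))))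
     = (\<lambda>x. (c*d) * exp (\<i> * complex_of_real ((t+u) \<bullet> x)))"
    by (auto simp: inner_add_left algebra_simps exp_add[symmetric])
  then show ?case by (simp add: ct.ct_exp)
next
  case (ct_add f g)
  then show ?case by (simp add: distrib_left ct.ct_add)
qed

lemma ct_mult: "ct f \<Longrightarrow> ct g \<Longrightarrow> ct (\<lambda>x. f x * g x)"
proof (induction rule: ct.induct)
  case (ct_exp c t)
  then show ?case by (rule ct_mult_exp)
next
  case (ct_add f1 f2)
  then show ?case by (simp add: distrib_right ct.ct_add)
qed

lemma ct_meas: "ct f \<Longrightarrow> f \<in> borel_measurable borel"
  by (induction rule: ct.induct) (auto intro!: borel_measurable_continuous_onI continuous_intros)

lemma ct_bounded: "ct f \<Longrightarrow> \<exists>B. \<forall>x. norm (f x) \<le> B"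
proof (induction rule: ct.induct)
  case (ct_exp c t)
  have "norm (c * exp (\<i> * complex_of_real (t \<bullet> x))) \<le> norm c" for x
    by (simp add: norm_mult)
  then show ?case by blast
next
  case (ct_add f g)
  then obtain A B where "\<forall>x. norm (f x) \<le> A" "\<forall>x. norm (g x) \<le> B" by blast
  then have "\<forall>x. norm (f x + g x) \<le> A + B" by (meson add_mono norm_triangle_le)
  then show ?case by blast
qed

lemma ct_integral_eq:
  fixes P Q :: "(real^'n) measure"
  assumes "finite_measure P" "finite_measure Q" "sets P = sets borel" "sets Q = sets borel"
    and F: "\<And>t. (\<integral>x. exp (\<i> * complex_of_real (t \<bullet> x)) \<partial>P) = (\<integral>x. exp (\<i> * complex_of_real (t \<bullet> x)) \<partial>Q)"
  shows "ct f \<Longrightarrow> (\<integral>x. f x \<partial>P) = (\<integral>x. f x \<partial>Q)"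
proof (induction rule: ct.induct)
  case (ct_exp c t)
  then show ?case using F[of t] by simp
next
  case (ct_add f g)
  have int: "integrable M h" if "finite_measure M" "sets M = sets borel" "ct h" for M h
  proof -
    interpret finite_measure M by fact
    from ct_bounded[OF that(3)] obtain B where "\<forall>x. norm (h x) \<le> B" by blast
    moreover have "h \<in> borel_measurable M"
      using ct_meas[OF that(3)] measurable_cong_sets[OF that(2) refl] by blast
    ultimately show ?thesis by (intro integrable_const_bound[where B=B]) auto
  qed
  have "integrable P f" "integrable P g" "integrable Q f" "integrable Q g"
    using ct_add.hyps int assms by auto
  then show ?case using ct_add.IH by simp
qed




inductive tp :: "(complex^'n \<Rightarrow> real) \<Rightarrow> bool" where
  tp_const: "tp (\<lambda>z. c)"
| tp_re: "tp (\<lambda>z. Re (z$i))"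
| tp_im: "tp (\<lambda>z. Im (z$i))"
| tp_add: "tp f \<Longrightarrow> tp g \<Longrightarrow> tp (\<lambda>z. f z + g z)"
| tp_mult: "tp f \<Longrightarrow> tp g \<Longrightarrow> tp (\<lambda>z. f z * g z)"

definition Emap :: "real \<Rightarrow> real^'n \<Rightarrow> complex^'n" where
  "Emap w x = (\<chi> i. exp (\<i> * complex_of_real (w * x$i)))"

lemma tp_cont: "tp p \<Longrightarrow> continuous_on S p"
  by (induction rule: tp.induct) (auto intro!: continuous_intros)

lemma tp_sep: "(z::complex^'n) \<noteq> w \<Longrightarrow> \<exists>p. tp p \<and> p z \<noteq> p w"
proof -
  assume "z \<noteq> w"
  then obtain i where "z$i \<noteq> w$i" by (auto simp: vec_eq_iff)
  then have "Re (z$i) \<noteq> Re (w$i) \<or> Im (z$i) \<noteq> Im (w$i)" using complex_eqI by blast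
  then show ?thesis using tp_re[of i] tp_im[of i] by blast
qed

lemma ct_two: "ct (\<lambda>x. c * exp (\<i> * complex_of_real (t \<bullet> x)) + d * exp (\<i> * complex_of_real (u \<bullet> x)))"
  by (intro ct_add ct_exp)

lemma tp_ct: fixes p :: "complex^'n \<Rightarrow> real" shows "tp p \<Longrightarrow> ct (\<lambda>x. complex_of_real (p (Emap w x)))"
proof (induction rule: tp.induct)
  case (tp_const c)
  then show ?case by (simp add: ct_const)
next
  case (tp_re i)
  have "complex_of_real (Re (Emap w x $ i)) =
     (1/2) * exp (\<i> * complex_of_real ((w *\<^sub>R axis i 1) \<bullet> x))
     + (1/2) * exp (\<i> * complex_of_real ((-w *\<^sub>R axis i 1) \<bullet> x))" for x :: "real^'n"
  proof -
    have "complex_of_real (Re (Emap w x $ i)) = complex_of_real (cos (w * x$i))"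
      by (simp add: Emap_def Re_exp)
    also have "\<dots> = cos (complex_of_real (w * x$i))" by (simp only: cos_of_real)
    also have "\<dots> = (1/2) * exp (\<i> * complex_of_real ((w *\<^sub>R axis i 1) \<bullet> x))
     + (1/2) * exp (\<i> * complex_of_real ((-w *\<^sub>R axis i 1) \<bullet> x))"
      by (simp add: cos_exp_eq inner_axis' field_simps)
    finally show ?thesis .
  qed
  then have eq: "(\<lambda>x. complex_of_real (Re (Emap w x $ i))) = (\<lambda>x. (1/2) * exp (\<i> * complex_of_real ((w *\<^sub>R axis i 1) \<bullet> x))
     + (1/2) * exp (\<i> * complex_of_real ((-w *\<^sub>R axis i 1) \<bullet> x)))" by (rule ext)
  show ?case unfolding eq by (rule ct_two)
next
  case (tp_im i)
  have "complex_of_real (Im (Emap w x $ i)) =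
     (-\<i>/2) * exp (\<i> * complex_of_real ((w *\<^sub>R axis i 1) \<bullet> x))
     + (\<i>/2) * exp (\<i> * complex_of_real ((-w *\<^sub>R axis i 1) \<bullet> x))" for x :: "real^'n"
  proof -
    have "complex_of_real (Im (Emap w x $ i)) = complex_of_real (sin (w * x$i))"
      by (simp add: Emap_def Im_exp)
    also have "\<dots> = sin (complex_of_real (w * x$i))" by (simp only: sin_of_real)
    also have "\<dots> = (-\<i>/2) * exp (\<i> * complex_of_real ((w *\<^sub>R axis i 1) \<bullet> x))
     + (\<i>/2) * exp (\<i> * complex_of_real ((-w *\<^sub>R axis i 1) \<bullet> x))"
      by (simp add: sin_exp_eq inner_axis' field_simps)
    finally show ?thesis .
  qed
  then have eq: "(\<lambda>x. complex_of_real (Im (Emap w x $ i))) = (\<lambda>x. (-\<i>/2) * exp (\<i> * complex_of_real ((w *\<^sub>R axis i 1) \<bullet> x))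
     + (\<i>/2) * exp (\<i> * complex_of_real ((-w *\<^sub>R axis i 1) \<bullet> x)))" by (rule ext)
  show ?case unfolding eq by (rule ct_two)
next
  case (tp_add f g)
  then show ?case by (simp add: ct_add)
next
  case (tp_mult f g)
  then show ?case by (simp add: ct_mult)
qed




lemma exp_ii_eq: "exp (\<i> * complex_of_real a) = exp (\<i> * complex_of_real b) \<Longrightarrow> \<exists>n::int. a = b + 2 * pi * n"
proof -
  assume "exp (\<i> * complex_of_real a) = exp (\<i> * complex_of_real b)"
  then obtain n :: int where "\<i> * complex_of_real a = \<i> * complex_of_real b + (of_int (2 * n) * pi) * \<i>"
    unfolding exp_eq by blast
  then have "Im (\<i> * complex_of_real a) = Im (\<i> * complex_of_real b + (of_int (2 * n) * pi) * \<i>)" by simp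
  then have "a = b + 2 * pi * n" by simp
  then show ?thesis by blast
qed

lemma exp_ii_period: "exp (\<i> * complex_of_real (a + 2 * pi * of_int n)) = exp (\<i> * complex_of_real a)"
proof -
  have "\<i> * complex_of_real (a + 2 * pi * of_int n) = \<i> * complex_of_real a + (of_int (2 * n) * pi) * \<i>"
    by (simp add: algebra_simps)
  then show ?thesis unfolding exp_eq by blast
qed

lemma Emap_cont: "continuous_on S (Emap w)"
  unfolding Emap_def by (intro continuous_intros)

lemma reduce1:
  assumes "L > 0"
  shows "\<exists>b. \<bar>b\<bar> \<le> 4*L \<and> exp (\<i> * complex_of_real (pi/(4*L) * b)) = exp (\<i> * complex_of_real (pi/(4*L) * a))"
proof -
  define k :: int where "k = floor ((a + 4*L) / (8*L))"
  define b where "b = a - 8*L*k"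
  have "k \<le> (a + 4*L) / (8*L)" "(a + 4*L) / (8*L) < k + 1" unfolding k_def by linarith+
  then have "8*L*k \<le> a + 4*L" "a + 4*L < 8*L*(k+1)" using assms by (simp_all add: field_simps)
  then have "\<bar>b\<bar> \<le> 4*L" unfolding b_def by (simp add: algebra_simps)
  moreover have "pi/(4*L) * a = pi/(4*L) * b + 2 * pi * of_int k"
    unfolding b_def using assms by (simp add: field_simps)
  ultimately show ?thesis using exp_ii_period by metis
qed

definition Kbox :: "real \<Rightarrow> (real^'n) set" where
  "Kbox L = cbox (\<chi> i. - (4*L)) (\<chi> i. 4*L)"

lemma Kbox_mem: "x \<in> Kbox L \<longleftrightarrow> (\<forall>i. \<bar>x$i\<bar> \<le> 4*L)"
  unfolding Kbox_def mem_box_cart abs_le_iff by (smt (verit) vec_lambda_beta)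

lemma reduce:
  fixes x :: "real^'n"
  assumes "L > 0"
  shows "\<exists>y\<in>Kbox L. Emap (pi/(4*L)) y = Emap (pi/(4*L)) x"
proof -
  have "\<forall>i. \<exists>b. \<bar>b\<bar> \<le> 4*L \<and> exp (\<i> * complex_of_real (pi/(4*L) * b)) = exp (\<i> * complex_of_real (pi/(4*L) * x$i))"
    using reduce1[OF assms] by blast
  then obtain f where f: "\<And>i. \<bar>f i\<bar> \<le> 4*L \<and> exp (\<i> * complex_of_real (pi/(4*L) * f i)) = exp (\<i> * complex_of_real (pi/(4*L) * x$i))"
    by metis
  define y :: "real^'n" where "y = (\<chi> i. f i)"
  have "y \<in> Kbox L" using f by (simp add: Kbox_mem y_def)
  moreover have "Emap (pi/(4*L)) y = Emap (pi/(4*L)) x"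
    using f by (simp add: Emap_def y_def vec_eq_iff)
  ultimately show ?thesis by blast
qed

lemma fiber:
  assumes "L > 0" "x \<in> Kbox L" "y \<in> Kbox L" "Emap (pi/(4*L)) x = Emap (pi/(4*L)) y" "x \<noteq> y"
  shows "norm x \<ge> 4*L \<and> norm y \<ge> 4*L"
proof -
  obtain i where i: "x$i \<noteq> y$i" using assms(5) by (auto simp: vec_eq_iff)
  have "exp (\<i> * complex_of_real (pi/(4*L) * x$i)) = exp (\<i> * complex_of_real (pi/(4*L) * y$i))"
    using assms(4) by (simp add: Emap_def vec_eq_iff)
  then obtain n :: int where n: "pi/(4*L) * x$i = pi/(4*L) * y$i + 2 * pi * n"
    using exp_ii_eq by blast
  then have "pi/(4*L) * x$i = pi/(4*L) * (y$i + 8 * L * n)" using assms(1) by (simp add: field_simps)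
  then have e: "x$i = y$i + 8 * L * n" using assms(1) by simp
  have bx: "\<bar>x$i\<bar> \<le> 4*L" "\<bar>y$i\<bar> \<le> 4*L" using assms(2,3) by (auto simp: Kbox_mem)
  have "n \<noteq> 0" using e i by auto
  have "\<bar>8 * L * n\<bar> \<le> 8*L" using e bx by linarith
  then have "\<bar>real_of_int n\<bar> \<le> 1" using assms(1) by (simp add: abs_mult)
  then have "n = 1 \<or> n = -1" using \<open>n \<noteq> 0\<close> by linarith
  then have "\<bar>x$i\<bar> = 4*L \<and> \<bar>y$i\<bar> = 4*L" using e bx by auto
  then show ?thesis using component_le_norm_cart[of x i] component_le_norm_cart[of y i] by auto
qed




lemma space_UNIV:
  fixes M :: "('a::topological_space) measure"
  assumes "sets M = sets borel"
  shows "space M = UNIV"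
  by (subst space_borel[symmetric]) (rule sets_eq_imp_space_eq[OF assms])

lemma tail:
  fixes M :: "(real^'n) measure"
  assumes "finite_measure M" "sets M = sets borel" "e > 0"
  shows "\<exists>L>0. measure M (UNIV - cball 0 L) < e"
proof -
  interpret finite_measure M by fact
  have sp: "space M = UNIV" by (rule space_UNIV[OF assms(2)])
  define A where "A k = cball (0::real^'n) (real k)" for k
  have "range A \<subseteq> sets M" unfolding A_def assms(2) by auto
  moreover have "incseq A" unfolding A_def incseq_def by auto
  ultimately have lim: "(\<lambda>k. measure M (A k)) \<longlonglongrightarrow> measure M (\<Union>k. A k)"
    by (rule finite_Lim_measure_incseq)
  have "(\<Union>k. A k) = UNIV"
  proof safe
    fix x :: "real^'n"
    obtain k :: nat where "norm x \<le> k" using real_arch_simple by blast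
    then show "x \<in> (\<Union>k. A k)" unfolding A_def by auto
  qed auto
  with lim have "(\<lambda>k. measure M (A k)) \<longlonglongrightarrow> measure M (space M)" by (simp add: sp)
  then have "eventually (\<lambda>k. dist (measure M (A k)) (measure M (space M)) < e) sequentially"
    using assms(3) tendsto_iff by metis
  then obtain k where k: "\<And>j. j \<ge> k \<Longrightarrow> dist (measure M (A j)) (measure M (space M)) < e"
    unfolding eventually_sequentially by blast
  have "measure M (UNIV - A (Suc k)) = measure M (space M) - measure M (A (Suc k))"
    using finite_measure_compl[of "A (Suc k)"] assms(2) sp unfolding A_def by auto
  also have "\<dots> < e" using k[of "Suc k"] by (simp add: dist_real_def)
  finally show ?thesis unfolding A_def by (intro exI[of _ "real (Suc k)"]) auto
qed

lemma est:
  fixes M :: "(real^'n) measure" and f T :: "real^'n \<Rightarrow> real"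
  assumes "finite_measure M" "sets M = sets borel"
    and fm: "f \<in> borel_measurable borel" and Tm: "T \<in> borel_measurable borel"
    and fb: "\<And>x. \<bar>f x\<bar> \<le> B" and Tb: "\<And>x. \<bar>T x\<bar> \<le> B + e"
    and close: "\<And>x. norm x \<le> L \<Longrightarrow> \<bar>f x - T x\<bar> < e" and "e > 0"
  shows "\<bar>(\<integral>x. f x \<partial>M) - (\<integral>x. T x \<partial>M)\<bar> \<le> e * measure M (space M) + (2*B + e) * measure M (UNIV - cball 0 L)"
proof -
  interpret finite_measure M by fact
  have sp: "space M = UNIV" by (rule space_UNIV[OF assms(2)])
  have meas: "h \<in> borel_measurable M" if "h \<in> borel_measurable borel" for h :: "real^'n \<Rightarrow> real"
    using that measurable_cong_sets[OF assms(2) refl] by blast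
  have Cs: "UNIV - cball 0 L \<in> sets M" unfolding assms(2) by auto
  have intf: "integrable M f" by (rule integrable_const_bound[where B=B]) (use fb meas[OF fm] in auto)
  have intT: "integrable M T" by (rule integrable_const_bound[where B="B+e"]) (use Tb meas[OF Tm] in auto)
  have intI: "integrable M (indicator (UNIV - cball 0 L) :: real^'n \<Rightarrow> real)"
    using Cs by (intro integrable_const_bound[where B=1]) (auto simp: indicator_def)
  have pw: "\<bar>f x - T x\<bar> \<le> e + (2*B + e) * indicator (UNIV - cball 0 L) x" for x
  proof (cases "norm x \<le> L")
    case True
    then show ?thesis using close[OF True] by (simp add: indicator_def)
  next
    case False
    then show ?thesis using fb[of x] Tb[of x] \<open>e>0\<close> by (simp add: indicator_def)
  qed
  have "\<bar>(\<integral>x. f x \<partial>M) - (\<integral>x. T x \<partial>M)\<bar> = \<bar>\<integral>x. f x - T x \<partial>M\<bar>"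
    using intf intT by simp
  also have "\<dots> \<le> (\<integral>x. \<bar>f x - T x\<bar> \<partial>M)" by (rule integral_abs_bound)
  also have "\<dots> \<le> (\<integral>x. e + (2*B + e) * indicator (UNIV - cball 0 L) x \<partial>M)"
    using intf intT intI pw by (intro integral_mono) auto
  also have "\<dots> = e * measure M (space M) + (2*B + e) * measure M (UNIV - cball 0 L)"
    using intI Cs by (simp add: integral_add)
  finally show ?thesis .
qed




lemma step:
  fixes f :: "real^'n \<Rightarrow> real"
  assumes cf: "continuous_on UNIV f" and fb: "\<And>x. \<bar>f x\<bar> \<le> B" and L: "L > 0" and e: "e > 0"
  shows "\<exists>T. (\<forall>x. \<bar>T x\<bar> \<le> B + e) \<and> (\<forall>x. norm x \<le> L \<longrightarrow> \<bar>f x - T x\<bar> < e) \<and> ct (\<lambda>x. complex_of_real (T x))"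
proof -
  define w where "w = pi / (4*L)"
  define K :: "(real^'n) set" where "K = Kbox L"
  define E :: "real^'n \<Rightarrow> complex^'n" where "E = Emap w"
  define \<phi> :: "real^'n \<Rightarrow> real" where "\<phi> x = max 0 (min 1 (2 - norm x / L))" for x
  define g where "g x = f x * \<phi> x" for x
  have B0: "B \<ge> 0" using fb[of 0] by linarith
  have cg: "continuous_on UNIV g" unfolding g_def \<phi>_def
    by (intro continuous_intros cf) (use L in auto)
  have gb: "\<bar>g x\<bar> \<le> B" for x
  proof -
    have "0 \<le> \<phi> x" "\<phi> x \<le> 1" unfolding \<phi>_def by auto
    then have "\<bar>f x\<bar> * \<bar>\<phi> x\<bar> \<le> B * 1" using fb[of x] B0 by (intro mult_mono) auto
    then show ?thesis by (simp add: g_def abs_mult)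
  qed
  have gL: "g x = f x" if "norm x \<le> L" for x
  proof -
    have "norm x / L \<le> 1" using that L by (simp add: field_simps)
    then show ?thesis unfolding g_def \<phi>_def by simp
  qed
  have g0: "g x = 0" if "norm x \<ge> 4*L" for x
  proof -
    have "norm x / L \<ge> 4" using that L by (simp add: field_simps)
    then show ?thesis unfolding g_def \<phi>_def by simp
  qed
  have cK: "compact K" unfolding K_def Kbox_def by simp
  have cE: "continuous_on A E" for A unfolding E_def by (rule Emap_cont)
  define S where "S = E ` K"
  have cS: "compact S" unfolding S_def by (intro compact_continuous_image cE cK)
  define h where "h z = g (SOME x. x \<in> K \<and> E x = z)" for z
  have hE: "h (E x) = g x" if "x \<in> K" for x
  proof -
    have "\<exists>y. y \<in> K \<and> E y = E x" using that by blast
    then have y: "(SOME y. y \<in> K \<and> E y = E x) \<in> K \<and> E (SOME y. y \<in> K \<and> E y = E x) = E x"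
      by (rule someI_ex)
    define y where "y = (SOME y. y \<in> K \<and> E y = E x)"
    have "g y = g x"
    proof (cases "y = x")
      case False
      then have "norm y \<ge> 4*L \<and> norm x \<ge> 4*L"
        using fiber[OF L, of y x] y that unfolding y_def K_def E_def w_def by auto
      then show ?thesis using g0 by auto
    qed simp
    then show ?thesis unfolding h_def y_def by simp
  qed
  have ch: "continuous_on S h"
    unfolding continuous_on_closed_vimage[OF compact_imp_closed[OF cS]]
  proof (intro allI impI)
    fix C :: "real set" assume "closed C"
    have eq: "h -` C \<inter> S = E ` (g -` C \<inter> K)"
      unfolding S_def using hE by auto
    have "closed (g -` C)" using closed_vimage[OF \<open>closed C\<close>] cg by blast
    then have "compact (g -` C \<inter> K)" using cK by (simp add: compact_Int_closed Int_commute)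
    then have "compact (E ` (g -` C \<inter> K))" by (intro compact_continuous_image cE)
    then show "closed (h -` C \<inter> S)" unfolding eq by (rule compact_imp_closed)
  qed
  have "\<exists>g. tp g \<and> (\<forall>x\<in>S. \<bar>h x - g x\<bar> < e)"
    apply (rule Stone_Weierstrass_HOL[OF cS])
    apply (rule tp_const)
    apply (erule tp_cont)
    apply (erule conjE, erule (1) tp_add)
    apply (erule conjE, erule (1) tp_mult)
    apply (rule tp_sep, blast)
    apply (rule ch)
    apply (rule e)
    done
  then obtain p where p: "tp p" "\<forall>z\<in>S. \<bar>h z - p z\<bar> < e" by blast
  define T where "T x = p (E x)" for x
  have "\<bar>T x\<bar> \<le> B + e" for x
  proof -
    obtain y where y: "y \<in> K" "E y = E x" using reduce[OF L, of x] unfolding K_def E_def w_def by blast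
    have "\<bar>h (E y) - p (E y)\<bar> < e" using p(2) y(1) unfolding S_def by auto
    then have "\<bar>g y - T x\<bar> < e" using hE[OF y(1)] y(2) by (simp add: T_def)
    then show ?thesis using gb[of y] by linarith
  qed
  moreover have "\<bar>f x - T x\<bar> < e" if "norm x \<le> L" for x
  proof -
    have "x \<in> K" unfolding K_def Kbox_mem
    proof
      fix i show "\<bar>x$i\<bar> \<le> 4*L" using component_le_norm_cart[of x i] that L by linarith
    qed
    then have "\<bar>h (E x) - p (E x)\<bar> < e" using p(2) unfolding S_def by auto
    then show ?thesis using hE[OF \<open>x \<in> K\<close>] gL[OF that] by (simp add: T_def)
  qed
  moreover have "ct (\<lambda>x. complex_of_real (T x))" unfolding T_def E_def by (rule tp_ct[OF p(1)])
  ultimately show ?thesis by blast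
qed

lemma bc_eq:
  fixes P Q :: "(real^'n) measure" and f :: "real^'n \<Rightarrow> real"
  assumes fP: "finite_measure P" and fQ: "finite_measure Q"
    and sP: "sets P = sets borel" and sQ: "sets Q = sets borel"
    and F: "\<And>t. (\<integral>x. exp (\<i> * complex_of_real (t \<bullet> x)) \<partial>P) = (\<integral>x. exp (\<i> * complex_of_real (t \<bullet> x)) \<partial>Q)"
    and cf: "continuous_on UNIV f" and fb: "\<And>x. \<bar>f x\<bar> \<le> B"
  shows "(\<integral>x. f x \<partial>P) = (\<integral>x. f x \<partial>Q)"
proof -
  define d where "d = (\<integral>x. f x \<partial>P) - (\<integral>x. f x \<partial>Q)"
  define mP where "mP = measure P (space P)"
  define mQ where "mQ = measure Q (space Q)"
  define C where "C = mP + mQ + 4*B + 2"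
  have B0: "B \<ge> 0" using fb[of 0] by linarith
  have C0: "C > 0" unfolding C_def mP_def mQ_def using B0 by (simp add: add_nonneg_pos)
  have fm: "f \<in> borel_measurable borel" by (rule borel_measurable_continuous_onI[OF cf])
  have bound: "\<bar>d\<bar> \<le> e * C" if e: "0 < e" "e \<le> 1" for e
  proof -
    obtain L1 where L1: "L1 > 0" "measure P (UNIV - cball 0 L1) < e" using tail[OF fP sP e(1)] by blast
    obtain L2 where L2: "L2 > 0" "measure Q (UNIV - cball 0 L2) < e" using tail[OF fQ sQ e(1)] by blast
    define L where "L = max L1 L2"
    have L: "L > 0" unfolding L_def using L1 by simp
    have "measure P (UNIV - cball 0 L) \<le> measure P (UNIV - cball 0 L1)"
      by (rule finite_measure.finite_measure_mono[OF fP]) (unfold sP, auto simp: L_def)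
    then have tP: "measure P (UNIV - cball 0 L) \<le> e" using L1 by simp
    have "measure Q (UNIV - cball 0 L) \<le> measure Q (UNIV - cball 0 L2)"
      by (rule finite_measure.finite_measure_mono[OF fQ]) (unfold sQ, auto simp: L_def)
    then have tQ: "measure Q (UNIV - cball 0 L) \<le> e" using L2 by simp
    obtain T where T: "\<forall>x. \<bar>T x\<bar> \<le> B + e" "\<forall>x. norm x \<le> L \<longrightarrow> \<bar>f x - T x\<bar> < e"
       "ct (\<lambda>x. complex_of_real (T x))"
      using step[OF cf fb L e(1)] by blast
    have "(\<lambda>x. Re (complex_of_real (T x))) \<in> borel_measurable borel"
      using measurable_compose[OF ct_meas[OF T(3)] borel_measurable_Re] by (simp add: comp_def)
    then have Tm: "T \<in> borel_measurable borel" by simp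
    have eP: "\<bar>(\<integral>x. f x \<partial>P) - (\<integral>x. T x \<partial>P)\<bar> \<le> e * mP + (2*B + e) * measure P (UNIV - cball 0 L)"
      unfolding mP_def by (rule est[OF fP sP fm Tm fb]) (use T e in auto)
    have eQ: "\<bar>(\<integral>x. f x \<partial>Q) - (\<integral>x. T x \<partial>Q)\<bar> \<le> e * mQ + (2*B + e) * measure Q (UNIV - cball 0 L)"
      unfolding mQ_def by (rule est[OF fQ sQ fm Tm fb]) (use T e in auto)
    have "(\<integral>x. complex_of_real (T x) \<partial>P) = (\<integral>x. complex_of_real (T x) \<partial>Q)"
      by (rule ct_integral_eq[OF fP fQ sP sQ F T(3)])
    then have eqT: "(\<integral>x. T x \<partial>P) = (\<integral>x. T x \<partial>Q)" by simp
    have m1: "(2*B + e) * measure P (UNIV - cball 0 L) \<le> (2*B + 1) * e"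
      using tP e B0 by (intro mult_mono) auto
    have m2: "(2*B + e) * measure Q (UNIV - cball 0 L) \<le> (2*B + 1) * e"
      using tQ e B0 by (intro mult_mono) auto
    have "\<bar>d\<bar> \<le> e * mP + (2*B+1)*e + e * mQ + (2*B+1)*e"
      using eP eQ eqT m1 m2 unfolding d_def by linarith
    also have "\<dots> = e * C" unfolding C_def by (simp add: algebra_simps)
    finally show ?thesis .
  qed
  have "d = 0"
  proof (rule ccontr)
    assume "d \<noteq> 0"
    define e where "e = min 1 (\<bar>d\<bar> / (2*C))"
    have e0: "0 < e" "e \<le> 1" unfolding e_def using \<open>d \<noteq> 0\<close> C0 by auto
    have "e * C \<le> \<bar>d\<bar> / (2*C) * C" using C0 unfolding e_def by (intro mult_right_mono) auto
    also have "\<dots> < \<bar>d\<bar>" using C0 \<open>d \<noteq> 0\<close> by (simp add: field_simps)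
    finally show False using bound[OF e0] by linarith
  qed
  then show ?thesis unfolding d_def by simp
qed




lemma relu_cont: "continuous_on UNIV relu_vec"
  unfolding relu_vec_def by (intro continuous_intros)

lemma relu_norm: "norm (relu_vec x) \<le> norm x"
  by (rule norm_le_componentwise_cart) (simp add: relu_vec_def)

lemma relu_split: "x = relu_vec x - relu_vec (- x)"
  by (simp add: relu_vec_def vec_eq_iff max_def)

lemma mv_neg: "(S::real^'n^'n) *v (- t) = - (S *v t)"
  by (simp add: vec_eq_iff matrix_vector_mult_def sum_negf)

theorem mainTheorem17:
  fixes M :: "'a measure" and X :: "'a \<Rightarrow> real^'n" and S :: "real^'n^'n"
  assumes "centered_gaussian_vector M X S"
  shows "(\<integral>\<omega>. norm (relu_vec (X \<omega>)) \<partial>M) \<ge> 1/2 * (\<integral>\<omega>. norm (X \<omega>) \<partial>M)"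
proof -
  have pM: "prob_space M" and Xm: "X \<in> borel_measurable M"
    and hd: "\<And>u. distr M borel (\<lambda>\<omega>. u \<bullet> X \<omega>) =
        (if u \<bullet> (S *v u) = 0 then return borel 0
         else density lborel (normal_density 0 (sqrt (u \<bullet> (S *v u)))))"
    using assms unfolding centered_gaussian_vector_def by auto
  have Xm': "(\<lambda>\<omega>. - X \<omega>) \<in> borel_measurable M" using Xm by measurable
  define P where "P = distr M borel X"
  define Q where "Q = distr M borel (\<lambda>\<omega>. - X \<omega>)"
  have fP: "finite_measure P" unfolding P_def
    using prob_space.prob_space_distr[OF pM Xm] prob_space_def by blast
  have fQ: "finite_measure Q" unfolding Q_def
    using prob_space.prob_space_distr[OF pM Xm'] prob_space_def by blast
  have sP: "sets P = sets borel" and sQ: "sets Q = sets borel" unfolding P_def Q_def by auto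
  have um: "(\<lambda>\<omega>. u \<bullet> X \<omega>) \<in> borel_measurable M" for u using Xm by measurable
  have em: "(\<lambda>s::real. exp (\<i> * complex_of_real s)) \<in> borel_measurable borel"
    by (intro borel_measurable_continuous_onI continuous_intros)
  have emv: "(\<lambda>x::real^'n. exp (\<i> * complex_of_real (t \<bullet> x))) \<in> borel_measurable borel" for t
    by (intro borel_measurable_continuous_onI continuous_intros)
  have F: "(\<integral>x. exp (\<i> * complex_of_real (t \<bullet> x)) \<partial>P) = (\<integral>x. exp (\<i> * complex_of_real (t \<bullet> x)) \<partial>Q)" for t
  proof -
    have "(\<integral>x. exp (\<i> * complex_of_real (t \<bullet> x)) \<partial>P) = (\<integral>\<omega>. exp (\<i> * complex_of_real (t \<bullet> X \<omega>)) \<partial>M)"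
      unfolding P_def by (rule integral_distr[OF Xm emv])
    also have "\<dots> = (\<integral>s. exp (\<i> * complex_of_real s) \<partial>distr M borel (\<lambda>\<omega>. t \<bullet> X \<omega>))"
      by (rule integral_distr[OF um em, symmetric])
    also have "distr M borel (\<lambda>\<omega>. t \<bullet> X \<omega>) = distr M borel (\<lambda>\<omega>. (-t) \<bullet> X \<omega>)"
      unfolding hd by (simp add: mv_neg)
    also have "(\<integral>s. exp (\<i> * complex_of_real s) \<partial>distr M borel (\<lambda>\<omega>. (-t) \<bullet> X \<omega>))
       = (\<integral>\<omega>. exp (\<i> * complex_of_real ((-t) \<bullet> X \<omega>)) \<partial>M)"
      by (rule integral_distr[OF um em])
    also have "\<dots> = (\<integral>\<omega>. exp (\<i> * complex_of_real (t \<bullet> (- X \<omega>))) \<partial>M)" by simp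
    also have "\<dots> = (\<integral>x. exp (\<i> * complex_of_real (t \<bullet> x)) \<partial>Q)"
      unfolding Q_def by (rule integral_distr[OF Xm' emv, symmetric])
    finally show ?thesis .
  qed
  define G where "G x = norm (relu_vec x)" for x :: "real^'n"
  have cG: "continuous_on UNIV G" unfolding G_def by (intro continuous_intros relu_cont)
  have Gm: "G \<in> borel_measurable borel" by (rule borel_measurable_continuous_onI[OF cG])
  define GN where "GN n x = min (G x) (real n)" for n :: nat and x
  have GNm: "GN n \<in> borel_measurable borel" for n unfolding GN_def using Gm by measurable
  have eqN: "(\<integral>\<omega>. GN n (X \<omega>) \<partial>M) = (\<integral>\<omega>. GN n (- X \<omega>) \<partial>M)" for n
  proof -
    have cGN: "continuous_on UNIV (GN n)" unfolding GN_def by (intro continuous_intros cG)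
    have bGN: "\<bar>GN n x\<bar> \<le> real n" for x unfolding GN_def G_def by auto
    have "(\<integral>x. GN n x \<partial>P) = (\<integral>x. GN n x \<partial>Q)" by (rule bc_eq[OF fP fQ sP sQ F cGN bGN])
    then show ?thesis unfolding P_def Q_def
      using integral_distr[OF Xm GNm] integral_distr[OF Xm' GNm] by simp
  qed
  show ?thesis
  proof (cases "integrable M (\<lambda>\<omega>. norm (X \<omega>))")
    case False
    then have "(\<integral>\<omega>. norm (X \<omega>) \<partial>M) = 0" by (rule not_integrable_integral_eq)
    moreover have "(\<integral>\<omega>. norm (relu_vec (X \<omega>)) \<partial>M) \<ge> 0" by (rule integral_nonneg_AE) auto
    ultimately show ?thesis by simp
  next
    case True
    have GXm: "(\<lambda>\<omega>. G (Y \<omega>)) \<in> borel_measurable M" if "Y \<in> borel_measurable M" for Y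
      using measurable_compose[OF that Gm] by (simp add: comp_def)
    have lim: "(\<lambda>n. \<integral>\<omega>. GN n (Y \<omega>) \<partial>M) \<longlonglongrightarrow> (\<integral>\<omega>. G (Y \<omega>) \<partial>M)"
      and intG: "integrable M (\<lambda>\<omega>. G (Y \<omega>))"
      if Ym: "Y \<in> borel_measurable M" and nY: "\<And>\<omega>. norm (Y \<omega>) = norm (X \<omega>)" for Y
    proof -
      have a: "(\<lambda>\<omega>. G (Y \<omega>)) \<in> borel_measurable M" by (rule GXm[OF Ym])
      have b: "(\<lambda>\<omega>. GN n (Y \<omega>)) \<in> borel_measurable M" for n
        using measurable_compose[OF Ym GNm] by (simp add: comp_def)
      have c: "AE \<omega> in M. (\<lambda>n. GN n (Y \<omega>)) \<longlonglongrightarrow> G (Y \<omega>)"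
      proof (intro AE_I2 tendsto_eventually)
        fix \<omega>
        obtain k :: nat where "G (Y \<omega>) \<le> real k" using real_arch_simple by blast
        then show "\<forall>\<^sub>F n in sequentially. GN n (Y \<omega>) = G (Y \<omega>)"
          unfolding eventually_sequentially GN_def by (intro exI[of _ k]) auto
      qed
      have d: "AE \<omega> in M. norm (GN n (Y \<omega>)) \<le> norm (X \<omega>)" for n
      proof (intro AE_I2)
        fix \<omega>
        have "norm (relu_vec (Y \<omega>)) \<le> norm (Y \<omega>)" by (rule relu_norm)
        then show "norm (GN n (Y \<omega>)) \<le> norm (X \<omega>)" using nY[of \<omega>] unfolding GN_def G_def by auto
      qed
      show "(\<lambda>n. \<integral>\<omega>. GN n (Y \<omega>) \<partial>M) \<longlonglongrightarrow> (\<integral>\<omega>. G (Y \<omega>) \<partial>M)"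
        by (rule integral_dominated_convergence[OF a b True c d])
      show "integrable M (\<lambda>\<omega>. G (Y \<omega>))"
        by (rule integrable_dominated_convergence[OF a b True c d])
    qed
    have l1: "(\<lambda>n. \<integral>\<omega>. GN n (X \<omega>) \<partial>M) \<longlonglongrightarrow> (\<integral>\<omega>. G (X \<omega>) \<partial>M)" by (rule lim[OF Xm]) simp
    have l2: "(\<lambda>n. \<integral>\<omega>. GN n (- X \<omega>) \<partial>M) \<longlonglongrightarrow> (\<integral>\<omega>. G (- X \<omega>) \<partial>M)" by (rule lim[OF Xm']) simp
    have i1: "integrable M (\<lambda>\<omega>. G (X \<omega>))" by (rule intG[OF Xm]) simp
    have i2: "integrable M (\<lambda>\<omega>. G (- X \<omega>))" by (rule intG[OF Xm']) simp
    have eq: "(\<integral>\<omega>. G (X \<omega>) \<partial>M) = (\<integral>\<omega>. G (- X \<omega>) \<partial>M)"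
    proof -
      have l1': "(\<lambda>n. \<integral>\<omega>. GN n (- X \<omega>) \<partial>M) \<longlonglongrightarrow> (\<integral>\<omega>. G (X \<omega>) \<partial>M)"
        using l1 unfolding eqN .
      show ?thesis by (rule LIMSEQ_unique[OF l1' l2])
    qed
    have pw: "norm (X \<omega>) \<le> G (X \<omega>) + G (- X \<omega>)" for \<omega>
    proof -
      have "norm (X \<omega>) = norm (relu_vec (X \<omega>) - relu_vec (- X \<omega>))" using relu_split[of "X \<omega>"] by simp
      also have "\<dots> \<le> norm (relu_vec (X \<omega>)) + norm (relu_vec (- X \<omega>))" by (rule norm_triangle_ineq4)
      finally show ?thesis unfolding G_def .
    qed
    have "(\<integral>\<omega>. norm (X \<omega>) \<partial>M) \<le> (\<integral>\<omega>. G (X \<omega>) + G (- X \<omega>) \<partial>M)"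
      using True i1 i2 pw by (intro integral_mono) auto
    also have "\<dots> = 2 * (\<integral>\<omega>. G (X \<omega>) \<partial>M)" using i1 i2 eq by simp
    finally show ?thesis unfolding G_def by simp
  qed
qed


end
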